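(* Let $n\ge 3$ and $N=r(n,n)$. Let $G$ be a bichromatic graph on $N$ vertices, and suppose $G$ contains distinct unbuilt pairs $p_1,\ldots,p_s$ and distinct unbuilt pairs $q_1,\ldots,q_t$ such that $p_i$ is independent to $q_j$ for every $1\le i\le s$ and $1\le j\le t$. Then $s(G)\ge \min(s,t)$.
   Context: $r(n,n)$ is the least $N$ such that every red/blue colouring of the edges of $K_N$ contains a monochromatic $K_n$. A bichromatic graph is a triple $G=(V,R,B)$ with $R,B\subseteq\binom{V}{2}$ and $R\cap B=\emptyset$; $R$ are the red edges, $B$ the blue edges, and $e(G)=|R|+|B|$. An unbuilt pair of $G$ is a pair of distinct vertices $u,v$ with $uv\notin R\cup B$. Two vertex-disjoint pairs $(u_1,u_2)$ and $(v_1,v_2)$ are independent in $G$ if both are unbuilt and there exist a red edge $u_iv_j\in R$ and a blue edge $u_{i'}v_{j'}\in B$ for some (not necessarily distinct) $i,i',j,j'\in\{1,2\}$. The $(n,n;N)$-game: Builder and Painter play on $N$ vertices; each turn Builder builds an edge between two non-adjacent vertices and Painter colours it red or blue; Builder wins once a monochromatic $K_n$ (red or blue) appears. For a bichromatic graph $G$ on $N$ vertices, $s(G)$ is the largest nonnegative integer $s$ such that Builder has a strategy that, starting the $(n,n;N)$-game from the position $G$ (its already built and coloured edges), guarantees a win using at most $\binom{N}{2}-e(G)-s$ further moves regardless of Painter's play. *)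

theory Defs
  imports Main
begin

definition pairs :: "'a set \<Rightarrow> 'a set set" where
  "pairs V = {e. \<exists>u v. u \<in> V \<and> v \<in> V \<and> u \<noteq> v \<and> e = {u, v}}"

text \<open>Diagonal Ramsey number r(n,n): least N such that every red/blue colouring
  of K_N (red edges = C, blue edges = the rest) has a monochromatic K_n.\<close>
definition ramsey_num :: "nat \<Rightarrow> nat" where
  "ramsey_num n = (LEAST N. \<forall>C :: nat set set. \<exists>S \<subseteq> {..<N}. card S = n \<and>
      (pairs S \<subseteq> C \<or> pairs S \<inter> C = {}))"

definition bichromatic :: "'a set \<Rightarrow> 'a set set \<Rightarrow> 'a set set \<Rightarrow> bool" where
  "bichromatic V R B \<longleftrightarrow> R \<subseteq> pairs V \<and> B \<subseteq> pairs V \<and> R \<inter> B = {}"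

definition unbuilt :: "'a set \<Rightarrow> 'a set set \<Rightarrow> 'a set set \<Rightarrow> 'a set \<Rightarrow> bool" where
  "unbuilt V R B p \<longleftrightarrow> p \<in> pairs V \<and> p \<notin> R \<and> p \<notin> B"

definition independent :: "'a set \<Rightarrow> 'a set set \<Rightarrow> 'a set set \<Rightarrow> 'a set \<Rightarrow> 'a set \<Rightarrow> bool" where
  "independent V R B p q \<longleftrightarrow> p \<inter> q = {} \<and> unbuilt V R B p \<and> unbuilt V R B q \<and>
     (\<exists>x\<in>p. \<exists>y\<in>q. {x, y} \<in> R) \<and> (\<exists>x\<in>p. \<exists>y\<in>q. {x, y} \<in> B)"

definition has_mono :: "'a set \<Rightarrow> nat \<Rightarrow> 'a set set \<Rightarrow> 'a set set \<Rightarrow> bool" where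
  "has_mono V n R B \<longleftrightarrow> (\<exists>S \<subseteq> V. card S = n \<and> (pairs S \<subseteq> R \<or> pairs S \<subseteq> B))"

text \<open>builder_wins V n k R B: in the (n,n;|V|)-game started from position (R,B),
  Builder has a strategy that guarantees a win using at most k further moves,
  whatever Painter does.\<close>
fun builder_wins :: "'a set \<Rightarrow> nat \<Rightarrow> nat \<Rightarrow> 'a set set \<Rightarrow> 'a set set \<Rightarrow> bool" where
  "builder_wins V n 0 R B = has_mono V n R B"
| "builder_wins V n (Suc k) R B = (has_mono V n R B \<or>
     (\<exists>e \<in> pairs V - (R \<union> B).
        builder_wins V n k (insert e R) B \<and> builder_wins V n k R (insert e B)))"

text \<open>s(G): the largest nonnegative s such that Builder can guarantee a win within
  C(N,2) - e(G) - s further moves (a nonnegative number of moves).\<close>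
definition s_val :: "'a set \<Rightarrow> nat \<Rightarrow> 'a set set \<Rightarrow> 'a set set \<Rightarrow> nat" where
  "s_val V n R B = (GREATEST s. int s \<le> int (card V choose 2) - int (card R + card B) \<and>
      builder_wins V n (nat (int (card V choose 2) - int (card R + card B) - int s)) R B)"

end

theory Submission
  imports Defs "HOL-Library.Ramsey"
begin

lemma build_all:
  assumes "finite E" "E \<subseteq> pairs V - (R \<union> B)"
    "\<forall>X\<subseteq>E. builder_wins V n j (R \<union> X) (B \<union> (E - X))"
  shows "builder_wins V n (card E + j) R B"
  using assms
proof (induction E arbitrary: R B rule: finite_induct)
  case empty
  then show ?case by (metis Diff_empty Un_empty_right add_0 card.empty empty_subsetI)
next
  case (insert e F)
  have 1: "builder_wins V n (card F + j) (insert e R) B"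
  proof (rule insert.IH)
    show "F \<subseteq> pairs V - (insert e R \<union> B)" using insert by auto
    show "\<forall>X\<subseteq>F. builder_wins V n j (insert e R \<union> X) (B \<union> (F - X))"
    proof (intro allI impI)
      fix X assume X: "X \<subseteq> F"
      have a: "R \<union> insert e X = insert e R \<union> X" by auto
      have b: "B \<union> (insert e F - insert e X) = B \<union> (F - X)" using insert(2) X by auto
      have "insert e X \<subseteq> insert e F" using X by auto
      then show "builder_wins V n j (insert e R \<union> X) (B \<union> (F - X))"
        using insert(5) a b by metis
    qed
  qed
  have 2: "builder_wins V n (card F + j) R (insert e B)"
  proof (rule insert.IH)
    show "F \<subseteq> pairs V - (R \<union> insert e B)" using insert by auto
    show "\<forall>X\<subseteq>F. builder_wins V n j (R \<union> X) (insert e B \<union> (F - X))"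
    proof (intro allI impI)
      fix X assume X: "X \<subseteq> F"
      have b: "B \<union> (insert e F - X) = insert e B \<union> (F - X)" using insert(2) X by auto
      have "X \<subseteq> insert e F" using X by auto
      then show "builder_wins V n j (R \<union> X) (insert e B \<union> (F - X))"
        using insert(5) b by metis
    qed
  qed
  have e: "e \<in> pairs V - (R \<union> B)" using insert by auto
  have "card (insert e F) + j = Suc (card F + j)" using insert by simp
  then show ?case using 1 2 e by (metis builder_wins.simps(2))
qed

lemma ramsey_nat: "\<exists>N. \<forall>C :: nat set set. \<exists>S \<subseteq> {..<N}. card S = n \<and>
      (pairs S \<subseteq> C \<or> pairs S \<inter> C = {})"
proof -
  obtain r where r: "\<forall>(V::nat set) (E::nat set set). finite V \<and> card V \<ge> r \<longrightarrow>
    (\<exists>R \<subseteq> V. card R = n \<and> clique R E \<or> card R = n \<and> indep R E)"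
    using ramsey2[of n n] by blast
  show ?thesis
  proof (rule exI[of _ r], rule allI)
    fix C :: "nat set set"
    obtain S where "S \<subseteq> {..<r}" "card S = n \<and> clique S C \<or> card S = n \<and> indep S C"
      using r[rule_format, of "{..<r}" C] by auto
    then show "\<exists>S \<subseteq> {..<r}. card S = n \<and> (pairs S \<subseteq> C \<or> pairs S \<inter> C = {})"
      unfolding clique_def indep_def pairs_def by blast
  qed
qed

lemma ramsey_V:
  assumes "finite V" "card V = ramsey_num n"
  shows "\<exists>S\<subseteq>V. card S = n \<and> (pairs S \<subseteq> C \<or> pairs S \<inter> C = {})"
proof -
  have P: "\<forall>C :: nat set set. \<exists>S \<subseteq> {..<ramsey_num n}. card S = n \<and>
      (pairs S \<subseteq> C \<or> pairs S \<inter> C = {})"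
    unfolding ramsey_num_def using ramsey_nat by (rule LeastI_ex)
  obtain h where h: "bij_betw h {0..<card V} V" using ex_bij_betw_nat_finite assms(1) by blast
  define C' where "C' = {e. h ` e \<in> C}"
  obtain S where S: "S \<subseteq> {..<ramsey_num n}" "card S = n" "pairs S \<subseteq> C' \<or> pairs S \<inter> C' = {}"
    using P by blast
  have SV: "S \<subseteq> {0..<card V}" using S(1) assms(2) by auto
  have inj: "inj_on h S" using inj_on_subset[OF bij_betw_imp_inj_on[OF h] SV] .
  have hS: "h ` S \<subseteq> V" using bij_betw_imp_surj_on[OF h] SV by (metis image_mono)
  have cS: "card (h ` S) = n" using card_image[OF inj] S(2) by simp
  have key: "\<exists>a b. a \<in> S \<and> b \<in> S \<and> a \<noteq> b \<and> e = h ` {a,b}" if "e \<in> pairs (h ` S)" for e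
  proof -
    from that obtain u v where "u \<in> h ` S" "v \<in> h ` S" "u \<noteq> v" "e = {u,v}" unfolding pairs_def by blast
    then obtain a b where "a \<in> S" "b \<in> S" "u = h a" "v = h b" "u \<noteq> v" "e = {u,v}" by blast
    then have "a \<in> S \<and> b \<in> S \<and> a \<noteq> b \<and> e = h ` {a,b}" by auto
    then show ?thesis by blast
  qed
  have ab: "{a,b} \<in> pairs S" if "a \<in> S" "b \<in> S" "a \<noteq> b" for a b
    using that unfolding pairs_def by blast
  show ?thesis
  proof (rule exI[of _ "h ` S"], intro conjI hS cS)
    show "pairs (h ` S) \<subseteq> C \<or> pairs (h ` S) \<inter> C = {}"
    proof (cases "pairs S \<subseteq> C'")
      case True
      have "e \<in> C" if e: "e \<in> pairs (h ` S)" for e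
      proof -
        obtain a b where "a \<in> S" "b \<in> S" "a \<noteq> b" "e = h ` {a,b}" using key[OF e] by blast
        then have "{a,b} \<in> C'" "e = h ` {a,b}" using ab True by auto
        then show ?thesis unfolding C'_def by simp
      qed
      then have "pairs (h ` S) \<subseteq> C" by blast
      then show ?thesis ..
    next
      case False
      then have "pairs S \<inter> C' = {}" using S(3) by blast
      have "e \<notin> C" if e: "e \<in> pairs (h ` S)" for e
      proof -
        obtain a b where "a \<in> S" "b \<in> S" "a \<noteq> b" "e = h ` {a,b}" using key[OF e] by blast
        then have "{a,b} \<notin> C'" "e = h ` {a,b}" using ab \<open>pairs S \<inter> C' = {}\<close> by auto
        then show ?thesis unfolding C'_def by simp
      qed
      then have "pairs (h ` S) \<inter> C = {}" by blast
      then show ?thesis ..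
    qed
  qed
qed

lemma pair_mem: "p \<in> pairs S \<Longrightarrow> x \<in> p \<Longrightarrow> x \<in> S"
  unfolding pairs_def by blast

lemma core:
  assumes "pairs S \<subseteq> K" "K \<inter> D = {}"
    "\<forall>p\<in>Pm. \<forall>q\<in>Qm. p \<inter> q = {} \<and> (\<exists>x\<in>p. \<exists>y\<in>q. {x,y} \<in> D)"
    "K \<subseteq> K0 \<union> Y \<union> Z" "Y \<subseteq> Pm" "Z \<subseteq> Qm"
  shows "pairs S \<subseteq> K0 \<union> Y \<or> pairs S \<subseteq> K0 \<union> Z"
proof (cases "(\<exists>p\<in>Pm. p \<in> pairs S) \<and> (\<exists>q\<in>Qm. q \<in> pairs S)")
  case True
  then obtain p q where pq: "p \<in> Pm" "q \<in> Qm" "p \<in> pairs S" "q \<in> pairs S" by blast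
  have "p \<inter> q = {} \<and> (\<exists>x\<in>p. \<exists>y\<in>q. {x,y} \<in> D)" using assms(3) pq(1,2) by blast
  then obtain x y where xy: "x \<in> p" "y \<in> q" "{x,y} \<in> D" "p \<inter> q = {}" by blast
  have "x \<in> S" using pair_mem[OF pq(3) xy(1)] .
  moreover have "y \<in> S" using pair_mem[OF pq(4) xy(2)] .
  moreover have "x \<noteq> y" using xy by blast
  ultimately have "{x,y} \<in> pairs S" unfolding pairs_def by blast
  then have "{x,y} \<in> K" by (rule subsetD[OF assms(1)])
  then have False using assms(2) xy(3) by blast
  then show ?thesis ..
next
  case False
  show ?thesis
  proof (cases "\<exists>p\<in>Pm. p \<in> pairs S")
    case True
    then have nq: "\<forall>q\<in>Qm. q \<notin> pairs S" using False by blast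
    have "pairs S \<subseteq> K0 \<union> Y"
    proof
      fix e assume e: "e \<in> pairs S"
      then have "e \<in> K0 \<union> Y \<union> Z" using assms(1,4) by blast
      moreover have "e \<notin> Z" using nq e assms(6) by blast
      ultimately show "e \<in> K0 \<union> Y" by blast
    qed
    then show ?thesis ..
  next
    case F2: False
    have "pairs S \<subseteq> K0 \<union> Z"
    proof
      fix e assume e: "e \<in> pairs S"
      then have "e \<in> K0 \<union> Y \<union> Z" using assms(1,4) by blast
      moreover have "e \<notin> Y" using F2 e assms(5) by blast
      ultimately show "e \<in> K0 \<union> Z" by blast
    qed
    then show ?thesis ..
  qed
qed

theorem lemma2p5:
  fixes V :: "'a set" and n :: nat and R B P Q :: "'a set set"
  assumes "n \<ge> 3"
    and "finite V" and "card V = ramsey_num n"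
    and "bichromatic V R B"
    and "\<forall>p\<in>P. unbuilt V R B p" and "\<forall>q\<in>Q. unbuilt V R B q"
    and "finite P" and "finite Q"
    and "\<forall>p\<in>P. \<forall>q\<in>Q. independent V R B p q"
  shows "min (card P) (card Q) \<le> s_val V n R B"
proof -
  define m where "m = min (card P) (card Q)"
  define W where "W = pairs V - (R \<union> B)"
  obtain Pm where Pm: "Pm \<subseteq> P" "card Pm = m" "finite Pm"
    using obtain_subset_with_card_n[of m P] m_def by auto
  obtain Qm where Qm: "Qm \<subseteq> Q" "card Qm = m" "finite Qm"
    using obtain_subset_with_card_n[of m Q] m_def by auto
  have pV: "pairs V = nsets V 2"
    unfolding pairs_def nsets_def by (auto simp: card_2_iff)
  have finW: "finite W" unfolding W_def pV using assms(2) finite_imp_finite_nsets by blast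
  have RB: "R \<subseteq> pairs V" "B \<subseteq> pairs V" "R \<inter> B = {}" using assms(4) unfolding bichromatic_def by auto
  have finRB: "finite R" "finite B" using RB finite_subset finite_imp_finite_nsets assms(2) pV by metis+
  have cW: "card W = (card V choose 2) - (card R + card B)"
  proof -
    have "card W = card (pairs V) - card (R \<union> B)"
      unfolding W_def using RB finRB by (simp add: card_Diff_subset)
    also have "card (R \<union> B) = card R + card B" using RB finRB card_Un_disjoint by blast
    finally show ?thesis using pV assms(2) by simp
  qed
  have cW2: "card R + card B \<le> card V choose 2"
  proof -
    have "card (R \<union> B) \<le> card (pairs V)" using RB pV assms(2) finite_imp_finite_nsets
      by (metis card_mono le_sup_iff)
    then show ?thesis using RB finRB card_Un_disjoint pV assms(2) by (metis card_nsets)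
  qed
  have PW: "Pm \<subseteq> W" "Qm \<subseteq> W" using Pm Qm assms(5,6) unfolding W_def unbuilt_def by auto
  have PQ: "Pm \<inter> Qm = {}"
  proof -
    have "p \<noteq> q" if "p \<in> Pm" "q \<in> Qm" for p q
    proof -
      have "independent V R B p q" using assms(9) that Pm Qm by blast
      then have "p \<inter> q = {}" "p \<in> pairs V" unfolding independent_def unbuilt_def by auto
      then show ?thesis unfolding pairs_def by auto
    qed
    then show ?thesis by blast
  qed
  have ind: "\<forall>p\<in>Pm. \<forall>q\<in>Qm. p \<inter> q = {} \<and> (\<exists>x\<in>p. \<exists>y\<in>q. {x,y} \<in> B)
     \<and> (\<exists>x\<in>p. \<exists>y\<in>q. {x,y} \<in> R)"
    using assms(9) Pm Qm unfolding independent_def by blast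
  define E0 where "E0 = W - Pm - Qm"
  have finE0: "finite E0" using finW E0_def by simp
  have cE0: "card E0 + m + m = card W"
  proof -
    have "W = E0 \<union> Pm \<union> Qm" using PW E0_def by auto
    moreover have "card (E0 \<union> Pm \<union> Qm) = card E0 + card Pm + card Qm"
    proof -
      have d1: "E0 \<inter> Pm = {}" using E0_def by blast
      have d2: "(E0 \<union> Pm) \<inter> Qm = {}" using E0_def PQ by blast
      have "card (E0 \<union> Pm \<union> Qm) = card (E0 \<union> Pm) + card Qm"
        using card_Un_disjoint[OF _ Qm(3) d2] finE0 Pm(3) by simp
      also have "card (E0 \<union> Pm) = card E0 + card Pm"
        using card_Un_disjoint[OF finE0 Pm(3) d1] .
      finally show ?thesis .
    qed
    ultimately show ?thesis using Pm Qm by simp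
  qed
  have inner: "builder_wins V n m (R \<union> X) (B \<union> (E0 - X))" if X: "X \<subseteq> E0" for X
  proof -
    define R1 where "R1 = R \<union> X"
    define B1 where "B1 = B \<union> (E0 - X)"
    have alt: "(\<forall>Y\<subseteq>Pm. has_mono V n (R1 \<union> Y) (B1 \<union> (Pm - Y))) \<or>
               (\<forall>Z\<subseteq>Qm. has_mono V n (R1 \<union> Z) (B1 \<union> (Qm - Z)))"
    proof (rule ccontr)
      assume "\<not> ?thesis"
      then obtain Y Z where Y: "Y \<subseteq> Pm" "\<not> has_mono V n (R1 \<union> Y) (B1 \<union> (Pm - Y))"
        and Z: "Z \<subseteq> Qm" "\<not> has_mono V n (R1 \<union> Z) (B1 \<union> (Qm - Z))" by blast
      define Rf where "Rf = R1 \<union> Y \<union> Z"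
      define Bf where "Bf = B1 \<union> (Pm - Y) \<union> (Qm - Z)"
      obtain S where S: "S \<subseteq> V" "card S = n" "pairs S \<subseteq> Rf \<or> pairs S \<inter> Rf = {}"
        using ramsey_V[OF assms(2,3), of Rf] by blast
      have pS: "pairs S \<subseteq> pairs V" using S(1) unfolding pairs_def by blast
      have RfB: "Rf \<inter> B = {}" unfolding Rf_def R1_def using RB X Y Z PW E0_def W_def by blast
      have BfR: "Bf \<inter> R = {}" unfolding Bf_def B1_def using RB X Y Z PW E0_def W_def by blast
      show False
      proof (cases "pairs S \<subseteq> Rf")
        case True
        have "pairs S \<subseteq> R1 \<union> Y \<or> pairs S \<subseteq> R1 \<union> Z"
          by (rule core[of S Rf B Pm Qm R1 Y Z, OF True RfB _ _ Y(1) Z(1)]) (use ind Rf_def in auto)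
        then show False using Y Z S unfolding has_mono_def by blast
      next
        case False
        then have e: "pairs S \<inter> Rf = {}" using S(3) by blast
        have "pairs S \<subseteq> Bf" using e pS PW unfolding Bf_def Rf_def B1_def R1_def W_def E0_def
          by blast
        then have "pairs S \<subseteq> B1 \<union> (Pm - Y) \<or> pairs S \<subseteq> B1 \<union> (Qm - Z)"
          by (rule core[of S Bf R Pm Qm B1 "Pm - Y" "Qm - Z", OF _ BfR]) (use ind Bf_def in auto)
        then show False using Y Z S unfolding has_mono_def by blast
      qed
    qed
    have PR1: "Pm \<subseteq> pairs V - (R1 \<union> B1)" using PW PQ unfolding R1_def B1_def W_def E0_def
      using X E0_def by blast
    have QR1: "Qm \<subseteq> pairs V - (R1 \<union> B1)" using PW PQ unfolding R1_def B1_def W_def E0_def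
      using X E0_def by blast
    have "builder_wins V n (card Pm + 0) R1 B1 \<or> builder_wins V n (card Qm + 0) R1 B1"
      using alt build_all[OF Pm(3) PR1, where n=n and j=0] build_all[OF Qm(3) QR1, where n=n and j=0] by auto
    then show ?thesis using Pm Qm R1_def B1_def by simp
  qed
  have E0W: "E0 \<subseteq> pairs V - (R \<union> B)" using E0_def W_def by auto
  have win: "builder_wins V n (card E0 + m) R B"
  proof -
    have "\<forall>X\<subseteq>E0. builder_wins V n m (R \<union> X) (B \<union> (E0 - X))" using inner by blast
    then show ?thesis by (rule build_all[OF finE0 E0W])
  qed
  define U where "U = int (card V choose 2) - int (card R + card B)"
  have UW: "U = int (card W)" using cW cW2 U_def by simp
  let ?P = "\<lambda>s. int s \<le> int (card V choose 2) - int (card R + card B) \<and>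
      builder_wins V n (nat (int (card V choose 2) - int (card R + card B) - int s)) R B"
  have Pm_: "?P m"
  proof
    show "int m \<le> int (card V choose 2) - int (card R + card B)"
      using UW cE0 U_def by linarith
    have "nat (int (card V choose 2) - int (card R + card B) - int m) = card E0 + m"
      using UW cE0 U_def by linarith
    then show "builder_wins V n (nat (int (card V choose 2) - int (card R + card B) - int m)) R B"
      using win by simp
  qed
  have bnd: "\<forall>y. ?P y \<longrightarrow> y \<le> card V choose 2"
  proof (intro allI impI)
    fix y assume "?P y"
    then have "int y \<le> int (card V choose 2)" by linarith
    then show "y \<le> card V choose 2" by linarith
  qed
  have "m \<le> (GREATEST s. ?P s)" using Greatest_le_nat[of ?P m, OF Pm_] bnd by blast
  then show ?thesis unfolding s_val_def m_def .
qed

end
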